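(* Let $G$ be a two-player objective game ($n=2$) and let $(a^*_1,a^*_2)\in A_1\times A_2$ be Pareto efficient with respect to $\pi$. If $(a^*_1,a^*_2)$ is a strict Nash equilibrium of $G$, then $(a^*_1,a^*_2)$ is stable under perfect observability, i.e. there is $\mu\in\mathcal M(\Theta^2)$ and a stable configuration $(\mu,b)$ whose aggregate outcome is the point mass at $(a^*_1,a^*_2)$.
   Context: Objective game: $G=(N,A,\pi)$ is a finite $n$-player normal-form game, $N=\{1,\dots,n\}$, finite action sets $A_i$, $A=\prod_{i\in N}A_i$, material payoff (fitness) functions $\pi_i:A\to\mathbb{R}$, extended multilinearly to mixed profiles in $\prod_{i}\Delta(A_i)$; $\pi=(\pi_1,\dots,\pi_n)$. Preference types: $\Theta=\mathbb{R}^A$ (utility functions on $A$, extended multilinearly to mixed profiles). $\mathcal{M}(\Theta^n)$ is the set of product distributions $\mu=\mu_1\times\dots\times\mu_n$ on $\Theta^n$ with each $\mu_i$ finitely supported; $\operatorname{supp}\mu=\prod_i\operatorname{supp}\mu_i$, $\mu(\theta)=\prod_i\mu_i(\theta_i)$, $\mu_{-i}(\theta_{-i})=\prod_{j\neq i}\mu_j(\theta_j)$. Mutants: for nonempty $J\subseteq N$, a mutant sub-profile is $\tilde\theta_J\in\prod_{j\in J}(\Theta\setminus\operatorname{supp}\mu_j)$ with shares $\varepsilon=(\varepsilon_j)_{j\in J}\in(0,1)^{|J|}$, $\|\varepsilon\|=\max_j\varepsilon_j$; the post-entry distribution $\tilde\mu^\varepsilon$ has $\tilde\mu^\varepsilon_i=(1-\varepsilon_i)\mu_i+\varepsilon_i\delta_{\tilde\theta_i}$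 for $i\in J$ and $\tilde\mu^\varepsilon_i=\mu_i$ otherwise. Perfect observability: for $\mu\in\mathcal M(\Theta^n)$, an equilibrium is a map $b:\operatorname{supp}\mu\to\prod_i\Delta(A_i)$ such that for each $\theta$, $b(\theta)$ is a Nash equilibrium of the normal-form game with action sets $A_i$ and payoffs $\theta_1,\dots,\theta_n$; $B_1(\mu)$ is the set of these; $(\mu,b)$ with $b\in B_1(\mu)$ is a configuration, with aggregate outcome $\varphi_{\mu,b}(a)=\sum_{\theta\in\operatorname{supp}\mu}\mu(\theta)\prod_{i}b_i(\theta)(a_i)$. Average fitness of $\theta_i\in\operatorname{supp}\mu_i$: $\Pi_{\theta_i}(\mu;b)=\sum_{\theta'_{-i}\in\operatorname{supp}\mu_{-i}}\mu_{-i}(\theta'_{-i})\pi_i(b(\theta_i,\theta'_{-i}))$. $(\mu,b)$ is balanced if for each $i$ all types in $\operatorname{supp}\mu_i$ have equal average fitness. Focal set: $B_1(\tilde\mu^\varepsilon;b)=\{\tilde b\in B_1(\tilde\mu^\varepsilon):\tilde b(\theta)=b(\theta)\ \forall\theta\in\operatorname{supp}\mu\}$. $(\mu,b)$ is stable if it is balanced and for every nonempty $J\subseteq N$ and every mutant sub-profile $\tilde\theta_J$ there is $\bar\epsilon\in(0,1)$ such that for every $\varepsilon\in(0,1)^{|J|}$ with $\|\varepsilon\|<\bar\epsilon$ and every $\tilde b\in B_1(\tilde\mu^\varepsilon;b)$, either (i) there is $j\in J$ with $\Pi_{\theta_j}(\tilde\mu^\varepsilon;\tilde b)>\Pi_{\tilde\theta_j}(\tilde\mu^\varepsilon;\tilde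 b)$ for all $\theta_j\in\operatorname{supp}\mu_j$, or (ii) for every $i\in N$ all types in $\operatorname{supp}\tilde\mu^\varepsilon_i$ have equal average fitness under $(\tilde\mu^\varepsilon,\tilde b)$. A profile $\sigma\in\prod_i\Delta(A_i)$ is stable if the product distribution $\varphi_\sigma(a)=\prod_i\sigma_i(a_i)$ is the aggregate outcome of some stable configuration. Pareto notions: $\sigma$ Pareto dominates $\sigma'$ if $\pi_i(\sigma)\ge\pi_i(\sigma')$ for all $i$ with strict inequality for some $i$; $\sigma$ is Pareto efficient if no profile in $\prod_i\Delta(A_i)$ Pareto dominates it. A strict Nash equilibrium $a^*$ satisfies $\pi_i(a^* )>\pi_i(a_i,a^*_{-i})$ for all $i$ and all $a_i\neq a^*_i$. *)

theory Defs
  imports Complex_Main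
begin

text \<open>A (preference) type is a utility function on A = 'a x 'b,
  written curried: 'a \<Rightarrow> 'b \<Rightarrow> real.\<close>

type_synonym ('a, 'b) ptype = "'a \<Rightarrow> 'b \<Rightarrow> real"

definition mixed :: "('c::finite \<Rightarrow> real) \<Rightarrow> bool" where
  "mixed s \<longleftrightarrow> (\<forall>x. 0 \<le> s x) \<and> sum s UNIV = 1"

definition EU :: "('a::finite, 'b::finite) ptype \<Rightarrow> ('a \<Rightarrow> real) \<Rightarrow> ('b \<Rightarrow> real) \<Rightarrow> real" where
  "EU u s1 s2 = (\<Sum>a1\<in>UNIV. \<Sum>a2\<in>UNIV. s1 a1 * s2 a2 * u a1 a2)"

definition nash :: "('a::finite, 'b::finite) ptype \<Rightarrow> ('a, 'b) ptype \<Rightarrow> ('a \<Rightarrow> real) \<Rightarrow> ('b \<Rightarrow> real) \<Rightarrow> bool" where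
  "nash th1 th2 s1 s2 \<longleftrightarrow> mixed s1 \<and> mixed s2 \<and>
     (\<forall>t1. mixed t1 \<longrightarrow> EU th1 t1 s2 \<le> EU th1 s1 s2) \<and>
     (\<forall>t2. mixed t2 \<longrightarrow> EU th2 s1 t2 \<le> EU th2 s1 s2)"

definition fdist :: "('t \<Rightarrow> real) \<Rightarrow> bool" where
  "fdist mu \<longleftrightarrow> (\<forall>x. 0 \<le> mu x) \<and> finite {x. mu x \<noteq> 0} \<and> sum mu {x. mu x \<noteq> 0} = 1"

definition supp :: "('t \<Rightarrow> real) \<Rightarrow> 't set" where
  "supp mu = {x. 0 < mu x}"

type_synonym ('a, 'b) eqmap = "('a, 'b) ptype \<Rightarrow> ('a, 'b) ptype \<Rightarrow> ('a \<Rightarrow> real) \<times> ('b \<Rightarrow> real)"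

definition B1 :: "(('a::finite, 'b::finite) ptype \<Rightarrow> real) \<Rightarrow> (('a, 'b) ptype \<Rightarrow> real) \<Rightarrow> ('a, 'b) eqmap \<Rightarrow> bool" where
  "B1 mu1 mu2 b \<longleftrightarrow> (\<forall>th1\<in>supp mu1. \<forall>th2\<in>supp mu2. nash th1 th2 (fst (b th1 th2)) (snd (b th1 th2)))"

definition outcome :: "(('a::finite, 'b::finite) ptype \<Rightarrow> real) \<Rightarrow> (('a, 'b) ptype \<Rightarrow> real) \<Rightarrow> ('a, 'b) eqmap \<Rightarrow> 'a \<Rightarrow> 'b \<Rightarrow> real" where
  "outcome mu1 mu2 b a1 a2 = (\<Sum>th1\<in>supp mu1. \<Sum>th2\<in>supp mu2.
      mu1 th1 * mu2 th2 * fst (b th1 th2) a1 * snd (b th1 th2) a2)"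

definition fit1 :: "('a::finite, 'b::finite) ptype \<Rightarrow> (('a, 'b) ptype \<Rightarrow> real) \<Rightarrow> ('a, 'b) eqmap \<Rightarrow> ('a, 'b) ptype \<Rightarrow> real" where
  "fit1 pi1 mu2 b th1 = (\<Sum>th2\<in>supp mu2. mu2 th2 * EU pi1 (fst (b th1 th2)) (snd (b th1 th2)))"

definition fit2 :: "('a::finite, 'b::finite) ptype \<Rightarrow> (('a, 'b) ptype \<Rightarrow> real) \<Rightarrow> ('a, 'b) eqmap \<Rightarrow> ('a, 'b) ptype \<Rightarrow> real" where
  "fit2 pi2 mu1 b th2 = (\<Sum>th1\<in>supp mu1. mu1 th1 * EU pi2 (fst (b th1 th2)) (snd (b th1 th2)))"

definition balanced :: "('a::finite, 'b::finite) ptype \<Rightarrow> ('a, 'b) ptype \<Rightarrow> (('a, 'b) ptype \<Rightarrow> real) \<Rightarrow> (('a, 'b) ptype \<Rightarrow> real) \<Rightarrow> ('a, 'b) eqmap \<Rightarrow> bool" where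
  "balanced pi1 pi2 mu1 mu2 b \<longleftrightarrow>
     (\<forall>th\<in>supp mu1. \<forall>th'\<in>supp mu1. fit1 pi1 mu2 b th = fit1 pi1 mu2 b th') \<and>
     (\<forall>th\<in>supp mu2. \<forall>th'\<in>supp mu2. fit2 pi2 mu1 b th = fit2 pi2 mu1 b th')"

text \<open>Post-entry distribution of one population: None = no mutant in that population,
  Some thm = mutant type thm with share eps.\<close>
definition post :: "('t \<Rightarrow> real) \<Rightarrow> 't option \<Rightarrow> real \<Rightarrow> 't \<Rightarrow> real" where
  "post mu m eps = (case m of None \<Rightarrow> mu
      | Some thm \<Rightarrow> (\<lambda>th. (1 - eps) * mu th + eps * (if th = thm then 1 else 0)))"

definition focal :: "(('a::finite, 'b::finite) ptype \<Rightarrow> real) \<Rightarrow> (('a, 'b) ptype \<Rightarrow> real) \<Rightarrow> ('a, 'b) eqmap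
     \<Rightarrow> (('a, 'b) ptype \<Rightarrow> real) \<Rightarrow> (('a, 'b) ptype \<Rightarrow> real) \<Rightarrow> ('a, 'b) eqmap \<Rightarrow> bool" where
  "focal mu1 mu2 b mu1' mu2' b' \<longleftrightarrow> B1 mu1' mu2' b' \<and>
     (\<forall>th1\<in>supp mu1. \<forall>th2\<in>supp mu2. b' th1 th2 = b th1 th2)"

text \<open>Stability against a given mutant sub-profile (J = players with Some).\<close>
definition stable_against :: "('a::finite, 'b::finite) ptype \<Rightarrow> ('a, 'b) ptype \<Rightarrow> (('a, 'b) ptype \<Rightarrow> real) \<Rightarrow> (('a, 'b) ptype \<Rightarrow> real)
     \<Rightarrow> ('a, 'b) eqmap \<Rightarrow> ('a, 'b) ptype option \<Rightarrow> ('a, 'b) ptype option \<Rightarrow> bool" where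
  "stable_against pi1 pi2 mu1 mu2 b m1 m2 \<longleftrightarrow>
    (\<exists>ebar. 0 < ebar \<and> ebar < 1 \<and>
      (\<forall>e1 e2. 0 < e1 \<and> e1 < ebar \<and> 0 < e2 \<and> e2 < ebar \<longrightarrow>
        (let mu1' = post mu1 m1 e1; mu2' = post mu2 m2 e2 in
         \<forall>b'. focal mu1 mu2 b mu1' mu2' b' \<longrightarrow>
           ((\<exists>thm. m1 = Some thm \<and>
                (\<forall>th\<in>supp mu1. fit1 pi1 mu2' b' th > fit1 pi1 mu2' b' thm)) \<or>
            (\<exists>thm. m2 = Some thm \<and>
                (\<forall>th\<in>supp mu2. fit2 pi2 mu1' b' th > fit2 pi2 mu1' b' thm)) \<or>
            balanced pi1 pi2 mu1' mu2' b'))))"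

definition stable_config :: "('a::finite, 'b::finite) ptype \<Rightarrow> ('a, 'b) ptype \<Rightarrow> (('a, 'b) ptype \<Rightarrow> real) \<Rightarrow> (('a, 'b) ptype \<Rightarrow> real)
     \<Rightarrow> ('a, 'b) eqmap \<Rightarrow> bool" where
  "stable_config pi1 pi2 mu1 mu2 b \<longleftrightarrow>
     fdist mu1 \<and> fdist mu2 \<and> B1 mu1 mu2 b \<and> balanced pi1 pi2 mu1 mu2 b \<and>
     (\<forall>m1 m2. (m1 \<noteq> None \<or> m2 \<noteq> None) \<longrightarrow>
        (\<forall>thm. m1 = Some thm \<longrightarrow> thm \<notin> supp mu1) \<longrightarrow>
        (\<forall>thm. m2 = Some thm \<longrightarrow> thm \<notin> supp mu2) \<longrightarrow>
        stable_against pi1 pi2 mu1 mu2 b m1 m2)"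

definition pareto_efficient :: "('a::finite, 'b::finite) ptype \<Rightarrow> ('a, 'b) ptype \<Rightarrow> ('a \<Rightarrow> real) \<Rightarrow> ('b \<Rightarrow> real) \<Rightarrow> bool" where
  "pareto_efficient pi1 pi2 s1 s2 \<longleftrightarrow>
     \<not> (\<exists>t1 t2. mixed t1 \<and> mixed t2 \<and>
          EU pi1 t1 t2 \<ge> EU pi1 s1 s2 \<and> EU pi2 t1 t2 \<ge> EU pi2 s1 s2 \<and>
          (EU pi1 t1 t2 > EU pi1 s1 s2 \<or> EU pi2 t1 t2 > EU pi2 s1 s2))"

definition strict_nash :: "('a, 'b) ptype \<Rightarrow> ('a, 'b) ptype \<Rightarrow> 'a \<Rightarrow> 'b \<Rightarrow> bool" where
  "strict_nash pi1 pi2 a1 a2 \<longleftrightarrow>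
     (\<forall>x. x \<noteq> a1 \<longrightarrow> pi1 a1 a2 > pi1 x a2) \<and> (\<forall>y. y \<noteq> a2 \<longrightarrow> pi2 a1 a2 > pi2 a1 y)"

definition pure :: "'c \<Rightarrow> 'c \<Rightarrow> real" where
  "pure x = (\<lambda>y. if y = x then 1 else 0)"

end

theory Submission
  imports Defs
begin


lemma mixed_le1: "mixed s \<Longrightarrow> s x \<le> (1::real)"
  unfolding mixed_def
  by (metis UNIV_I finite member_le_sum)

lemma sum_pure: "(\<Sum>y\<in>UNIV. (pure x :: 'c::finite \<Rightarrow> real) y * f y) = f x"
proof -
  have "(\<Sum>y\<in>UNIV. pure x y * f y) = (\<Sum>y\<in>UNIV. if y = x then f x else 0)"
    by (rule sum.cong) (auto simp: pure_def)
  then show ?thesis by simp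
qed

lemma EU_pure1: "EU u (pure x) t = (\<Sum>y\<in>UNIV. t y * u x y)"
proof -
  have "EU u (pure x) t = (\<Sum>a1\<in>UNIV. pure x a1 * (\<Sum>a2\<in>UNIV. t a2 * u a1 a2))"
    unfolding EU_def by (simp add: sum_distrib_left mult.assoc)
  then show ?thesis by (simp add: sum_pure)
qed

lemma EU_pure2: "EU u s (pure y) = (\<Sum>x\<in>UNIV. s x * u x y)"
proof -
  have "EU u s (pure y) = (\<Sum>a1\<in>UNIV. s a1 * (\<Sum>a2\<in>UNIV. pure y a2 * u a1 a2))"
    unfolding EU_def by (simp add: sum_distrib_left mult.assoc mult.left_commute)
  then show ?thesis by (simp add: sum_pure)
qed

lemma EU_lin1: "EU u s t = (\<Sum>x\<in>UNIV. s x * EU u (pure x) t)"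
  unfolding EU_pure1 unfolding EU_def
  by (simp add: sum_distrib_left mult.assoc)

lemma EU_lin2: "EU u s t = (\<Sum>y\<in>UNIV. t y * EU u s (pure y))"
  unfolding EU_pure2 unfolding EU_def
  apply (simp add: sum_distrib_left)
  apply (subst sum.swap)
  by (simp add: mult.commute mult.left_commute)

lemma EU_pp: "EU u (pure x) (pure y) = u x y"
  by (simp add: EU_pure1 sum_pure)

lemma EU_const_sub: "mixed s \<Longrightarrow> mixed t \<Longrightarrow> EU (\<lambda>x y. u x y - k) s t = EU u s t - k"
  unfolding EU_def mixed_def
  by (simp add: algebra_simps sum_subtractf sum_distrib_left[symmetric] sum_distrib_right[symmetric])

lemma mixed_pure: "mixed (pure x :: 'c::finite \<Rightarrow> real)"
  unfolding mixed_def pure_def by simp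



lemma alg_final:
  fixes a1 a2 b1 b2 r :: real
  assumes "a1 \<le> 0" "b1 > 0" "r > 0" "a1 + b1 > 0" "b1 + r * b2 \<le> 0"
    "a2 * b1 \<le> b2 * a1" "(a1 + b1) + r * (a2 + b2) > 0"
  shows False
proof -
  have "b1 * ((a1 + b1) + r * (a2 + b2)) > 0" using assms by simp
  moreover have "r * (a2 * b1) \<le> r * (b2 * a1)" using assms by simp
  ultimately have "(a1 + b1) * (b1 + r * b2) > 0" by (simp add: algebra_simps)
  moreover have "(a1 + b1) * (b1 + r * b2) \<le> 0"
    using assms by (simp add: mult_nonneg_nonpos)
  ultimately show False by simp
qed

lemma vertex:
  fixes V1 V2 lam :: "'c::finite \<Rightarrow> real"
  assumes r: "r > 0"
  and H: "\<forall>k. V1 k > 0 \<longrightarrow> V1 k + r * V2 k \<le> 0"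
  and Par: "\<forall>w. mixed w \<longrightarrow> \<not> ((\<Sum>k\<in>UNIV. w k * V1 k) \<ge> 0 \<and> (\<Sum>k\<in>UNIV. w k * V2 k) \<ge> 0 \<and>
              ((\<Sum>k\<in>UNIV. w k * V1 k) > 0 \<or> (\<Sum>k\<in>UNIV. w k * V2 k) > 0))"
  and lam: "mixed lam" and pos: "(\<Sum>k\<in>UNIV. lam k * V1 k) > 0"
  shows "(\<Sum>k\<in>UNIV. lam k * V1 k) + r * (\<Sum>k\<in>UNIV. lam k * V2 k) \<le> 0"
proof (rule ccontr)
  assume neg: "\<not> ?thesis"
  define S where "S = {k. V1 k + r * V2 k > 0}"
  define a1 where "a1 = (\<Sum>k\<in>UNIV. lam k * (if k \<in> S then V1 k else 0))"
  define a2 where "a2 = (\<Sum>k\<in>UNIV. lam k * (if k \<in> S then V2 k else 0))"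
  define b1 where "b1 = (\<Sum>k\<in>UNIV. lam k * (if k \<in> S then 0 else V1 k))"
  define b2 where "b2 = (\<Sum>k\<in>UNIV. lam k * (if k \<in> S then 0 else V2 k))"
  have lam0: "\<And>k. lam k \<ge> 0" using lam unfolding mixed_def by auto
  have sum1: "(\<Sum>k\<in>UNIV. lam k * V1 k) = a1 + b1"
    unfolding a1_def b1_def sum.distrib[symmetric] by (rule sum.cong) (auto simp: algebra_simps)
  have sum2: "(\<Sum>k\<in>UNIV. lam k * V2 k) = a2 + b2"
    unfolding a2_def b2_def sum.distrib[symmetric] by (rule sum.cong) (auto simp: algebra_simps)
  have SV1: "k \<in> S \<Longrightarrow> V1 k \<le> 0" for k
  proof (rule ccontr)
    assume k: "k \<in> S" and "\<not> V1 k \<le> 0"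
    then have "V1 k + r * V2 k \<le> 0" using H by simp
    then show False using k unfolding S_def by simp
  qed
  have SV2: "k \<in> S \<Longrightarrow> V2 k > 0" for k
  proof -
    assume k: "k \<in> S"
    then have "r * V2 k > 0" using SV1[OF k] unfolding S_def by simp
    then show ?thesis using r by (simp add: zero_less_mult_iff)
  qed
  have a1n: "a1 \<le> 0" unfolding a1_def
    by (rule sum_nonpos) (auto simp: mult_nonneg_nonpos lam0 SV1)
  have hb: "b1 + r * b2 \<le> 0"
  proof -
    have "b1 + r * b2 = (\<Sum>k\<in>UNIV. lam k * (if k \<in> S then 0 else V1 k + r * V2 k))"
      unfolding b1_def b2_def sum_distrib_left sum.distrib[symmetric]
      by (rule sum.cong) (auto simp: algebra_simps)
    also have "\<dots> \<le> 0"
      by (rule sum_nonpos) (auto simp: mult_nonneg_nonpos lam0 S_def)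
    finally show ?thesis .
  qed
  have P1: "a1 + b1 > 0" using pos sum1 by simp
  have tot: "(a1 + b1) + r * (a2 + b2) > 0" using neg sum1 sum2 by simp
  have b1p: "b1 > 0" using P1 a1n by simp
  have b2n: "b2 < 0"
  proof -
    have "r * b2 < 0" using hb b1p by simp
    then show ?thesis using r by (simp add: mult_less_0_iff)
  qed
  have a2p: "a2 > 0"
  proof -
    have "a1 + r * a2 > 0" using tot hb by (simp add: algebra_simps)
    then have "r * a2 > 0" using a1n by simp
    then show ?thesis using r by (simp add: zero_less_mult_iff)
  qed
  define LS where "LS = (\<Sum>k\<in>UNIV. lam k * (if k \<in> S then 1 else 0))"
  define LN where "LN = (\<Sum>k\<in>UNIV. lam k * (if k \<in> S then 0 else 1))"
  have LN0: "LN \<ge> 0" unfolding LN_def by (rule sum_nonneg) (simp add: lam0)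
  have ex: "\<exists>k. k \<in> S \<and> lam k > 0"
  proof (rule ccontr)
    assume nex: "\<not> (\<exists>k. k \<in> S \<and> lam k > 0)"
    have z: "lam k * (if k \<in> S then V2 k else 0) = 0" for k
    proof (cases "k \<in> S")
      case True
      then have "lam k = 0" using nex lam0[of k] by force
      then show ?thesis by simp
    qed simp
    have "a2 = 0" unfolding a2_def by (simp add: z)
    then show False using a2p by simp
  qed
  then obtain k0 where k0: "k0 \<in> S" "lam k0 > 0" by blast
  have LSp: "LS > 0"
  proof -
    have "lam k0 * (if k0 \<in> S then 1 else 0) \<le> LS" unfolding LS_def
      by (rule member_le_sum) (auto simp: lam0)
    then show ?thesis using k0 by simp
  qed
  define N where "N = - b2 * LS + a2 * LN"
  have Np: "N > 0" unfolding N_def using LSp LN0 b2n a2p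
    by (smt (verit) mult_nonneg_nonneg mult_pos_pos)
  define w where "w = (\<lambda>k. lam k * (if k \<in> S then - b2 else a2) / N)"
  have wm: "mixed w"
  proof -
    have "\<forall>x. 0 \<le> w x" unfolding w_def using lam0 Np b2n a2p by simp
    moreover have "sum w UNIV = N / N"
    proof -
      have "sum w UNIV = (\<Sum>k\<in>UNIV. (- b2 * (lam k * (if k \<in> S then 1 else 0)) + a2 * (lam k * (if k \<in> S then 0 else 1))) / N)"
        unfolding w_def by (rule sum.cong) auto
      also have "\<dots> = ((\<Sum>k\<in>UNIV. - b2 * (lam k * (if k \<in> S then 1 else 0))) + (\<Sum>k\<in>UNIV. a2 * (lam k * (if k \<in> S then 0 else 1)))) / N"
        by (simp only: sum_divide_distrib[symmetric] sum.distrib)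
      also have "\<dots> = N / N" unfolding N_def LS_def LN_def sum_distrib_left ..
      finally show ?thesis .
    qed
    ultimately show ?thesis unfolding mixed_def using Np by simp
  qed
  have w1: "(\<Sum>k\<in>UNIV. w k * V1 k) = (- b2 * a1 + a2 * b1) / N"
  proof -
    have "(\<Sum>k\<in>UNIV. w k * V1 k) = (\<Sum>k\<in>UNIV. (- b2 * (lam k * (if k \<in> S then V1 k else 0)) + a2 * (lam k * (if k \<in> S then 0 else V1 k))) / N)"
      unfolding w_def by (rule sum.cong) auto
    also have "\<dots> = ((\<Sum>k\<in>UNIV. - b2 * (lam k * (if k \<in> S then V1 k else 0))) + (\<Sum>k\<in>UNIV. a2 * (lam k * (if k \<in> S then 0 else V1 k)))) / N"
      by (simp only: sum_divide_distrib[symmetric] sum.distrib)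
    also have "\<dots> = (- b2 * a1 + a2 * b1) / N" unfolding a1_def b1_def sum_distrib_left ..
    finally show ?thesis .
  qed
  have w2: "(\<Sum>k\<in>UNIV. w k * V2 k) = (- b2 * a2 + a2 * b2) / N"
  proof -
    have "(\<Sum>k\<in>UNIV. w k * V2 k) = (\<Sum>k\<in>UNIV. (- b2 * (lam k * (if k \<in> S then V2 k else 0)) + a2 * (lam k * (if k \<in> S then 0 else V2 k))) / N)"
      unfolding w_def by (rule sum.cong) auto
    also have "\<dots> = ((\<Sum>k\<in>UNIV. - b2 * (lam k * (if k \<in> S then V2 k else 0))) + (\<Sum>k\<in>UNIV. a2 * (lam k * (if k \<in> S then 0 else V2 k)))) / N"
      by (simp only: sum_divide_distrib[symmetric] sum.distrib)
    also have "\<dots> = (- b2 * a2 + a2 * b2) / N" unfolding a2_def b2_def sum_distrib_left ..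
    finally show ?thesis .
  qed
  have "(- b2 * a1 + a2 * b1) / N \<le> 0"
    using Par[rule_format, OF wm] unfolding w1 w2 by auto
  then have "- b2 * a1 + a2 * b1 \<le> 0" using Np by (simp add: divide_le_0_iff)
  then have "a2 * b1 \<le> b2 * a1" by simp
  then show False using alg_final[OF a1n b1p r P1 hb _ tot] by simp
qed



lemma sum_mixed_sub: "mixed w \<Longrightarrow> (\<Sum>j\<in>UNIV. w j * (f j - k)) = (\<Sum>j\<in>UNIV. w j * f j) - k"
  unfolding mixed_def by (simp add: right_diff_distrib sum_subtractf sum_distrib_right[symmetric])

lemma dir:
  fixes u v :: "'a::finite \<Rightarrow> 'b::finite \<Rightarrow> real"
  assumes PAR: "\<forall>s t. mixed s \<longrightarrow> mixed t \<longrightarrow> \<not> (EU u s t - ku \<ge> 0 \<and> EU v s t - kv \<ge> 0 \<and>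
                   (EU u s t - ku > 0 \<or> EU v s t - kv > 0))"
    and r: "r > 0"
    and Hp: "\<forall>x y. u x y - ku > 0 \<longrightarrow> (u x y - ku) + r * (v x y - kv) \<le> 0"
    and s: "mixed s" and t: "mixed t" and pos: "EU u s t - ku > 0"
  shows "(EU u s t - ku) + r * (EU v s t - kv) \<le> 0"
proof -
  have step1: "EU u (pure x) t - ku > 0 \<longrightarrow> (EU u (pure x) t - ku) + r * (EU v (pure x) t - kv) \<le> 0" for x
  proof
    assume p: "EU u (pure x) t - ku > 0"
    have e1: "\<And>w. mixed w \<Longrightarrow> (\<Sum>j\<in>UNIV. w j * (u x j - ku)) = EU u (pure x) w - ku"
      by (simp add: sum_mixed_sub EU_pure1)
    have e2: "\<And>w. mixed w \<Longrightarrow> (\<Sum>j\<in>UNIV. w j * (v x j - kv)) = EU v (pure x) w - kv"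
      by (simp add: sum_mixed_sub EU_pure1)
    have "(\<Sum>j\<in>UNIV. t j * (u x j - ku)) + r * (\<Sum>j\<in>UNIV. t j * (v x j - kv)) \<le> 0"
    proof (rule vertex[OF r])
      show "\<forall>k. u x k - ku > 0 \<longrightarrow> (u x k - ku) + r * (v x k - kv) \<le> 0" using Hp by blast
      show "\<forall>w. mixed w \<longrightarrow> \<not> ((\<Sum>k\<in>UNIV. w k * (u x k - ku)) \<ge> 0 \<and> (\<Sum>k\<in>UNIV. w k * (v x k - kv)) \<ge> 0 \<and>
              ((\<Sum>k\<in>UNIV. w k * (u x k - ku)) > 0 \<or> (\<Sum>k\<in>UNIV. w k * (v x k - kv)) > 0))"
      proof (intro allI impI)
        fix w :: "'b \<Rightarrow> real" assume w: "mixed w"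
        show "\<not> ((\<Sum>k\<in>UNIV. w k * (u x k - ku)) \<ge> 0 \<and> (\<Sum>k\<in>UNIV. w k * (v x k - kv)) \<ge> 0 \<and>
              ((\<Sum>k\<in>UNIV. w k * (u x k - ku)) > 0 \<or> (\<Sum>k\<in>UNIV. w k * (v x k - kv)) > 0))"
          unfolding e1[OF w] e2[OF w] using PAR mixed_pure w by blast
      qed
      show "mixed t" by (rule t)
      show "(\<Sum>k\<in>UNIV. t k * (u x k - ku)) > 0" using p e1[OF t] by simp
    qed
    then show "(EU u (pure x) t - ku) + r * (EU v (pure x) t - kv) \<le> 0" using e1[OF t] e2[OF t] by simp
  qed
  have f1: "\<And>w. mixed w \<Longrightarrow> (\<Sum>x\<in>UNIV. w x * (EU u (pure x) t - ku)) = EU u w t - ku"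
    by (simp add: sum_mixed_sub EU_lin1[symmetric])
  have f2: "\<And>w. mixed w \<Longrightarrow> (\<Sum>x\<in>UNIV. w x * (EU v (pure x) t - kv)) = EU v w t - kv"
    by (simp add: sum_mixed_sub EU_lin1[symmetric])
  have "(\<Sum>x\<in>UNIV. s x * (EU u (pure x) t - ku)) + r * (\<Sum>x\<in>UNIV. s x * (EU v (pure x) t - kv)) \<le> 0"
  proof (rule vertex[OF r])
    show "\<forall>k. EU u (pure k) t - ku > 0 \<longrightarrow> (EU u (pure k) t - ku) + r * (EU v (pure k) t - kv) \<le> 0"
      using step1 by blast
    show "\<forall>w. mixed w \<longrightarrow> \<not> ((\<Sum>k\<in>UNIV. w k * (EU u (pure k) t - ku)) \<ge> 0 \<and> (\<Sum>k\<in>UNIV. w k * (EU v (pure k) t - kv)) \<ge> 0 \<and>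
              ((\<Sum>k\<in>UNIV. w k * (EU u (pure k) t - ku)) > 0 \<or> (\<Sum>k\<in>UNIV. w k * (EU v (pure k) t - kv)) > 0))"
    proof (intro allI impI)
      fix w :: "'a \<Rightarrow> real" assume w: "mixed w"
      show "\<not> ((\<Sum>k\<in>UNIV. w k * (EU u (pure k) t - ku)) \<ge> 0 \<and> (\<Sum>k\<in>UNIV. w k * (EU v (pure k) t - kv)) \<ge> 0 \<and>
              ((\<Sum>k\<in>UNIV. w k * (EU u (pure k) t - ku)) > 0 \<or> (\<Sum>k\<in>UNIV. w k * (EU v (pure k) t - kv)) > 0))"
        unfolding f1[OF w] f2[OF w] using PAR t w by blast
    qed
    show "mixed s" by (rule s)
    show "(\<Sum>k\<in>UNIV. s k * (EU u (pure k) t - ku)) > 0" using pos f1[OF s] by simp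
  qed
  then show ?thesis using f1[OF s] f2[OF s] by simp
qed

lemma bound_fin: "\<exists>B. \<forall>x. (f :: 'c::finite \<Rightarrow> real) x \<le> B"
  by (rule exI[of _ "Max (range f)"]) simp

lemma bound_fin2: "\<exists>B. \<forall>x y. (f :: 'a::finite \<Rightarrow> 'b::finite \<Rightarrow> real) x y \<le> B"
proof -
  obtain B where "\<forall>z. (\<lambda>(x,y). f x y) z \<le> B" using bound_fin by blast
  then show ?thesis by auto
qed



lemma core_half:
  fixes e K c M p q g m P :: real
  assumes "0 < e" "e * (K + 2) < 1" "c > 0" "K \<ge> 0" "p \<ge> 0" "c*p \<le> g" "m \<ge> -(M*q)"
    "(1-e)*g + e*m - e*P \<le> 0"
  shows "P \<ge> (K+1)*c*p - M*q"
proof -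
  have a: "1 - e \<ge> e * (K + 1)" using assms(2) by (simp add: algebra_simps)
  have e0: "1 - e \<ge> 0" using a assms(1,4) by (smt (verit) mult_nonneg_nonneg)
  have b: "(1-e) * g \<ge> (1-e) * (c*p)" using assms(6) e0 by (rule mult_left_mono)
  have c: "(1-e) * (c*p) \<ge> e*(K+1) * (c*p)" using a assms by (intro mult_right_mono) auto
  have d: "e*m \<ge> -(e*(M*q))" using mult_left_mono[OF assms(7), of e] assms(1) by simp
  have "e*P \<ge> (1-e)*g + e*m" using assms(8) by linarith
  then have "e*P \<ge> e*(K+1)*(c*p) - e*(M*q)" using b c d by linarith
  then have "e * P \<ge> e * ((K+1)*c*p - M*q)" by (simp add: algebra_simps)
  then show ?thesis using assms(1) by simp
qed

lemma core:
  fixes e1 e2 K c R M p q g1 g2 m1 m2 P1 P2 :: real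
  assumes e1: "0 < e1" "e1 * (K + 2) < 1" and e2: "0 < e2" "e2 * (K + 2) < 1"
   and c: "c > 0" and K: "K * c \<ge> R * M + M + 1" "K \<ge> 0" and R: "R \<ge> 1" and M: "M \<ge> 0"
   and pq: "p \<ge> 0" "q \<ge> 0" and g1: "c*p \<le> g1" "g1 \<le> M*p" and m1: "\<bar>m1\<bar> \<le> M*q"
   and g2: "c*q \<le> g2" "g2 \<le> M*q" and m2: "\<bar>m2\<bar> \<le> M*p"
   and r1: "P1 > 0 \<Longrightarrow> P1 + R*P2 \<le> 0" and r2: "P2 > 0 \<Longrightarrow> P2 + R*P1 \<le> 0"
   and par: "\<not>(P1 \<ge> 0 \<and> P2 \<ge> 0 \<and> (P1 > 0 \<or> P2 > 0))"
   and D1: "(1-e2)*g1 + e2*m1 - e2*P1 \<le> 0" and D2: "(1-e1)*g2 + e1*m2 - e1*P2 \<le> 0"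
  shows "(1-e2)*g1 + e2*m1 - e2*P1 = 0 \<and> (1-e1)*g2 + e1*m2 - e1*P2 = 0"
proof -
  define L where "L = (K+1)*c"
  have h1: "P1 \<ge> L*p - M*q" unfolding L_def
    by (rule core_half[OF e2 c K(2) pq(1) g1(1) _ D1]) (use m1 in linarith)
  have h2: "P2 \<ge> L*q - M*p" unfolding L_def
    by (rule core_half[OF e1 c K(2) pq(2) g2(1) _ D2]) (use m2 in linarith)
  have L1: "L - R*M > 0" unfolding L_def using K c M by (simp add: algebra_simps)
  have L2: "R*L - M > 0"
  proof -
    have "R*L \<ge> L" using R L1 M by (smt (verit) mult_le_cancel_right1 mult_nonneg_nonneg)
    then show ?thesis using L1 R M by (smt (verit) mult_le_cancel_right1)
  qed
  have pq0: "p = 0 \<and> q = 0"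
  proof (cases "P1 > 0")
    case True
    have "(L*p - M*q) + R*(L*q - M*p) \<le> 0"
      using r1[OF True] h1 h2 R by (smt (verit) mult_left_mono)
    then have "p*(L - R*M) + q*(R*L - M) \<le> 0" by (simp add: algebra_simps)
    moreover have "p*(L - R*M) \<ge> 0" "q*(R*L - M) \<ge> 0" using pq L1 L2 by auto
    ultimately have "p*(L - R*M) = 0" "q*(R*L - M) = 0" by linarith+
    then show ?thesis using L1 L2 by simp
  next
    case F1: False
    show ?thesis
    proof (cases "P2 > 0")
      case True
      have "(L*q - M*p) + R*(L*p - M*q) \<le> 0"
        using r2[OF True] h1 h2 R by (smt (verit) mult_left_mono)
      then have "q*(L - R*M) + p*(R*L - M) \<le> 0" by (simp add: algebra_simps)
      moreover have "q*(L - R*M) \<ge> 0" "p*(R*L - M) \<ge> 0" using pq L1 L2 by auto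
      ultimately have "q*(L - R*M) = 0" "p*(R*L - M) = 0" by linarith+
      then show ?thesis using L1 L2 by simp
    next
      case False
      have LM: "L > M" using L1 R M by (smt (verit) mult_le_cancel_right1)
      have a: "L*p \<le> M*q" "L*q \<le> M*p" using h1 h2 F1 False by linarith+
      have "L*(L*p) \<le> L*(M*q)" using a LM M by (intro mult_left_mono) auto
      also have "\<dots> = M*(L*q)" by simp
      also have "\<dots> \<le> M*(M*p)" using a M by (intro mult_left_mono) auto
      finally have "(L*L - M*M)*p \<le> 0" by (simp add: algebra_simps)
      moreover have "L*L - M*M > 0" using LM M by (smt (verit) mult_strict_mono)
      ultimately have "p = 0" using pq by (smt (verit) mult_pos_pos)
      then have "L*q \<le> 0" using a by simp
      then have "q = 0" using LM M pq mult_pos_pos[of L q] by linarith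
      then show ?thesis using \<open>p = 0\<close> by simp
    qed
  qed
  then have "P1 \<ge> 0" "P2 \<ge> 0" using h1 h2 by auto
  then have "P1 = 0" "P2 = 0" using par by auto
  moreover have "g1 = 0" "g2 = 0" "m1 = 0" "m2 = 0" using pq0 g1 g2 m1 m2 c by auto
  ultimately show ?thesis by simp
qed



definition ind1 :: "'a \<Rightarrow> ('a::finite, 'b::finite) ptype" where
  "ind1 a = (\<lambda>x y. if x = a then 1 else 0)"
definition ind2 :: "'b \<Rightarrow> ('a::finite, 'b::finite) ptype" where
  "ind2 b = (\<lambda>x y. if y = b then 1 else 0)"

lemma mixed_sum1: "mixed s \<Longrightarrow> sum s UNIV = 1" unfolding mixed_def by simp
lemma mixed_nn: "mixed s \<Longrightarrow> s x \<ge> 0" unfolding mixed_def by simp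

lemma sum_ind: "(\<Sum>x\<in>UNIV. (s::'c::finite\<Rightarrow>real) x * (if x = a then 1 else 0)) = s a"
proof -
  have "(\<Sum>x\<in>UNIV. s x * (if x = a then 1 else 0)) = (\<Sum>x\<in>UNIV. if x = a then s a else 0)"
    by (rule sum.cong) auto
  then show ?thesis by simp
qed

lemma EU_ind1: "mixed t \<Longrightarrow> EU (ind1 a) s t = s a"
proof -
  assume t: "mixed t"
  have "EU (ind1 a) s t = (\<Sum>x\<in>UNIV. s x * (\<Sum>y\<in>UNIV. t y * (if x = a then 1 else 0)))"
    unfolding EU_lin1[of _ s] EU_pure1 ind1_def ..
  also have "\<dots> = (\<Sum>x\<in>UNIV. s x * (if x = a then 1 else 0))"
    by (simp add: sum_distrib_right[symmetric] mixed_sum1[OF t])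
  finally show ?thesis by (simp add: sum_ind)
qed

lemma EU_ind2: "mixed s \<Longrightarrow> EU (ind2 b) s t = t b"
proof -
  assume s: "mixed s"
  have "EU (ind2 b) s t = (\<Sum>y\<in>UNIV. t y * (\<Sum>x\<in>UNIV. s x * (if y = b then 1 else 0)))"
    unfolding EU_lin2[of _ _ t] EU_pure2 ind2_def ..
  also have "\<dots> = (\<Sum>y\<in>UNIV. t y * (if y = b then 1 else 0))"
    by (simp add: sum_distrib_right[symmetric] mixed_sum1[OF s])
  finally show ?thesis by (simp add: sum_ind)
qed

lemma mixed_eq_pure: "mixed s \<Longrightarrow> s a = 1 \<Longrightarrow> s = pure a"
proof -
  assume s: "mixed s" and a: "s a = 1"
  have "sum s UNIV = s a + sum s (UNIV - {a})" by (simp add: sum.remove)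
  then have "sum s (UNIV - {a}) = 0" using a mixed_sum1[OF s] by simp
  then have "\<forall>x\<in>UNIV - {a}. s x = 0" by (subst sum_nonneg_eq_0_iff[symmetric]) (auto simp: mixed_nn[OF s])
  then show "s = pure a" using a unfolding pure_def by auto
qed

lemma nash_ind1: "nash (ind1 a) th s1 s2 \<Longrightarrow> s1 = pure a"
proof -
  assume n: "nash (ind1 a) th s1 s2"
  then have m: "mixed s1" "mixed s2" unfolding nash_def by auto
  have "EU (ind1 a) (pure a) s2 \<le> EU (ind1 a) s1 s2" using n mixed_pure unfolding nash_def by blast
  then have "1 \<le> s1 a" using m by (simp add: EU_ind1 pure_def)
  then have "s1 a = 1" using mixed_le1[OF m(1), of a] by linarith
  then show ?thesis using mixed_eq_pure m by blast
qed

lemma nash_ind2: "nash th (ind2 b) s1 s2 \<Longrightarrow> s2 = pure b"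
proof -
  assume n: "nash th (ind2 b) s1 s2"
  then have m: "mixed s1" "mixed s2" unfolding nash_def by auto
  have "EU (ind2 b) s1 (pure b) \<le> EU (ind2 b) s1 s2" using n mixed_pure unfolding nash_def by blast
  then have "1 \<le> s2 b" using m by (simp add: EU_ind2 pure_def)
  then have "s2 b = 1" using mixed_le1[OF m(2), of b] by linarith
  then show ?thesis using mixed_eq_pure m by blast
qed

lemma pure_same: "pure a a = 1" unfolding pure_def by simp

lemma nash_base: "nash (ind1 a) (ind2 b) (pure a) (pure b)"
proof -
  have ma: "mixed (pure a)" and mb: "mixed (pure b)" by (rule mixed_pure)+
  show ?thesis unfolding nash_def
    using ma mb by (auto simp: EU_ind1[OF mb] EU_ind2[OF ma] mixed_le1 pure_same)
qed

lemma supp_pure: "supp (pure x) = {x}" unfolding supp_def pure_def by auto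

lemma post_some:
  assumes "th0 \<noteq> v" "0 < e" "e < 1"
  shows "supp (post (pure th0) (Some v) e) = {th0, v}"
    "post (pure th0) (Some v) e th0 = 1 - e" "post (pure th0) (Some v) e v = e"
  using assms unfolding supp_def post_def pure_def by (auto simp: mult_pos_pos)

lemma fdist_pure: "fdist (pure x)"
proof -
  have "{y. pure x y \<noteq> 0} = {x}" unfolding pure_def by auto
  then show ?thesis unfolding fdist_def by (simp add: pure_def)
qed

lemma sum_bound:
  fixes s f :: "'c::finite \<Rightarrow> real"
  assumes s: "mixed s" and f: "\<forall>x. x \<noteq> a \<longrightarrow> lo \<le> f x \<and> f x \<le> hi" and fa: "f a = 0"
  shows "lo * (1 - s a) \<le> (\<Sum>x\<in>UNIV. s x * f x) \<and> (\<Sum>x\<in>UNIV. s x * f x) \<le> hi * (1 - s a)"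
proof -
  have e: "1 - s a = (\<Sum>x\<in>UNIV. s x * (if x = a then 0 else 1))"
  proof -
    have "(\<Sum>x\<in>UNIV. s x * (if x = a then 0 else 1)) = (\<Sum>x\<in>UNIV. s x - s x * (if x = a then 1 else 0))"
      by (rule sum.cong) auto
    then show ?thesis by (simp add: sum_subtractf sum_ind mixed_sum1[OF s])
  qed
  have "lo * (1 - s a) = (\<Sum>x\<in>UNIV. s x * (if x = a then 0 else lo))"
    unfolding e sum_distrib_left by (rule sum.cong) auto
  also have "\<dots> \<le> (\<Sum>x\<in>UNIV. s x * f x)"
    by (rule sum_mono) (use f fa mixed_nn[OF s] in \<open>auto intro: mult_left_mono\<close>)
  finally have 1: "lo * (1 - s a) \<le> (\<Sum>x\<in>UNIV. s x * f x)" .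
  have "(\<Sum>x\<in>UNIV. s x * f x) \<le> (\<Sum>x\<in>UNIV. s x * (if x = a then 0 else hi))"
    by (rule sum_mono) (use f fa mixed_nn[OF s] in \<open>auto intro: mult_left_mono\<close>)
  also have "\<dots> = hi * (1 - s a)"
    unfolding e sum_distrib_left by (rule sum.cong) auto
  finally show ?thesis using 1 by simp
qed

lemma sum_mixed_sub2: "mixed w \<Longrightarrow> (\<Sum>j\<in>UNIV. w j * (k - f j)) = k - (\<Sum>j\<in>UNIV. w j * f j)"
  unfolding mixed_def by (simp add: right_diff_distrib sum_subtractf sum_distrib_right[symmetric])



lemma fit1_single: "fit1 pp (pure th2) b' th = EU pp (fst (b' th th2)) (snd (b' th th2))"
  unfolding fit1_def supp_pure by (simp add: pure_same)

lemma fit2_single: "fit2 pp (pure th1) b' th = EU pp (fst (b' th1 th)) (snd (b' th1 th))"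
  unfolding fit2_def supp_pure by (simp add: pure_same)

lemma fit1_two: "th2 \<noteq> v \<Longrightarrow> 0 < e \<Longrightarrow> e < 1 \<Longrightarrow> fit1 pp (post (pure th2) (Some v) e) b' th =
   (1-e) * EU pp (fst (b' th th2)) (snd (b' th th2)) + e * EU pp (fst (b' th v)) (snd (b' th v))"
  unfolding fit1_def by (simp add: post_some)

lemma fit2_two: "th1 \<noteq> u \<Longrightarrow> 0 < e \<Longrightarrow> e < 1 \<Longrightarrow> fit2 pp (post (pure th1) (Some u) e) b' th =
   (1-e) * EU pp (fst (b' th1 th)) (snd (b' th1 th)) + e * EU pp (fst (b' u th)) (snd (b' u th))"
  unfolding fit2_def by (simp add: post_some)

lemma post_none: "post mu None e = mu" unfolding post_def by simp



lemma stable_C: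
  fixes pi1 pi2 :: "'a::finite \<Rightarrow> 'b::finite \<Rightarrow> real" and a1 :: 'a and a2 :: 'b
  assumes c: "c > 0" and M: "M \<ge> 0" and R: "R \<ge> 1" and K: "K \<ge> 0" "K*c \<ge> R*M + M + 1"
  and gap1: "\<forall>x. x \<noteq> a1 \<longrightarrow> c \<le> pi1 a1 a2 - pi1 x a2 \<and> pi1 a1 a2 - pi1 x a2 \<le> M"
  and gap2: "\<forall>y. y \<noteq> a2 \<longrightarrow> c \<le> pi2 a1 a2 - pi2 a1 y \<and> pi2 a1 a2 - pi2 a1 y \<le> M"
  and bd1: "\<forall>y. y \<noteq> a2 \<longrightarrow> -M \<le> pi1 a1 y - pi1 a1 a2 \<and> pi1 a1 y - pi1 a1 a2 \<le> M"
  and bd2: "\<forall>x. x \<noteq> a1 \<longrightarrow> -M \<le> pi2 x a2 - pi2 a1 a2 \<and> pi2 x a2 - pi2 a1 a2 \<le> M"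
  and rat1: "\<forall>s t. mixed s \<longrightarrow> mixed t \<longrightarrow> EU pi1 s t - pi1 a1 a2 > 0 \<longrightarrow>
               (EU pi1 s t - pi1 a1 a2) + R*(EU pi2 s t - pi2 a1 a2) \<le> 0"
  and rat2: "\<forall>s t. mixed s \<longrightarrow> mixed t \<longrightarrow> EU pi2 s t - pi2 a1 a2 > 0 \<longrightarrow>
               (EU pi2 s t - pi2 a1 a2) + R*(EU pi1 s t - pi1 a1 a2) \<le> 0"
  and PAR: "\<forall>s t. mixed s \<longrightarrow> mixed t \<longrightarrow> \<not> (EU pi1 s t - pi1 a1 a2 \<ge> 0 \<and> EU pi2 s t - pi2 a1 a2 \<ge> 0 \<and>
                   (EU pi1 s t - pi1 a1 a2 > 0 \<or> EU pi2 s t - pi2 a1 a2 > 0))"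
  and u: "u \<noteq> ind1 a1" and v: "v \<noteq> ind2 a2"
  shows "stable_against pi1 pi2 (pure (ind1 a1)) (pure (ind2 a2)) (\<lambda>_ _. (pure a1, pure a2)) (Some u) (Some v)"
proof -
  define th1 where "th1 = (ind1 a1 :: ('a,'b) ptype)"
  define th2 where "th2 = (ind2 a2 :: ('a,'b) ptype)"
  have K2: "K + 2 > 0" using K by simp
  have eb: "0 < 1/(K+2)" "1/(K+2) < 1" using K by auto
  show ?thesis unfolding stable_against_def Let_def th1_def[symmetric] th2_def[symmetric]
  proof (intro exI[of _ "1/(K+2)"] conjI eb allI impI)
    fix e1 e2 :: real and b' :: "('a,'b) eqmap"
    assume e: "0 < e1 \<and> e1 < 1/(K+2) \<and> 0 < e2 \<and> e2 < 1/(K+2)"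
    assume foc: "focal (pure th1) (pure th2) (\<lambda>_ _. (pure a1, pure a2)) (post (pure th1) (Some u) e1) (post (pure th2) (Some v) e2) b'"
    have e1: "0 < e1" "e1 * (K+2) < 1" "e1 < 1"
    proof -
      show "0 < e1" using e by simp
      show "e1 * (K+2) < 1" using e K2 by (simp add: less_divide_eq)
      show "e1 < 1" using e eb by linarith
    qed
    have e2: "0 < e2" "e2 * (K+2) < 1" "e2 < 1"
    proof -
      show "0 < e2" using e by simp
      show "e2 * (K+2) < 1" using e K2 by (simp add: less_divide_eq)
      show "e2 < 1" using e eb by linarith
    qed
    have u': "th1 \<noteq> u" and v': "th2 \<noteq> v" using u v th1_def th2_def by auto
    have S1: "supp (post (pure th1) (Some u) e1) = {th1, u}" using post_some[OF u' e1(1) e1(3)] by simp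
    have S2: "supp (post (pure th2) (Some v) e2) = {th2, v}" using post_some[OF v' e2(1) e2(3)] by simp
    have B: "\<And>x y. x \<in> {th1,u} \<Longrightarrow> y \<in> {th2,v} \<Longrightarrow> nash x y (fst (b' x y)) (snd (b' x y))"
      using foc S1 S2 unfolding focal_def B1_def by blast
    have b0: "b' th1 th2 = (pure a1, pure a2)" using foc unfolding focal_def supp_pure by simp
    define s1 where "s1 = fst (b' u th2)"
    define s2 where "s2 = snd (b' th1 v)"
    define sg where "sg = fst (b' u v)"
    define ta where "ta = snd (b' u v)"
    have nu: "nash u th2 s1 (snd (b' u th2))" using B[of u th2] s1_def by simp
    have bu: "snd (b' u th2) = pure a2" using nu nash_ind2 th2_def by blast
    have nv: "nash th1 v (fst (b' th1 v)) s2" using B[of th1 v] s2_def by simp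
    have bv: "fst (b' th1 v) = pure a1" using nv nash_ind1 th1_def by blast
    have nuv: "nash u v sg ta" using B[of u v] sg_def ta_def by simp
    have ms: "mixed s1" "mixed s2" "mixed sg" "mixed ta" using nu nv nuv unfolding nash_def by auto
    let ?mu1 = "post (pure th1) (Some u) e1" and ?mu2 = "post (pure th2) (Some v) e2"
    have F1a: "fit1 pi1 ?mu2 b' th1 = (1-e2) * pi1 a1 a2 + e2 * EU pi1 (pure a1) s2"
      using fit1_two[OF v' e2(1) e2(3)] b0 bv s2_def by (simp add: EU_pp)
    have F1u: "fit1 pi1 ?mu2 b' u = (1-e2) * EU pi1 s1 (pure a2) + e2 * EU pi1 sg ta"
      using fit1_two[OF v' e2(1) e2(3)] bu s1_def sg_def ta_def by simp
    have F2a: "fit2 pi2 ?mu1 b' th2 = (1-e1) * pi2 a1 a2 + e1 * EU pi2 s1 (pure a2)"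
      using fit2_two[OF u' e1(1) e1(3)] b0 bu s1_def by (simp add: EU_pp)
    have F2v: "fit2 pi2 ?mu1 b' v = (1-e1) * EU pi2 (pure a1) s2 + e1 * EU pi2 sg ta"
      using fit2_two[OF u' e1(1) e1(3)] bv s2_def sg_def ta_def by simp
    define g1 where "g1 = pi1 a1 a2 - EU pi1 s1 (pure a2)"
    define m1 where "m1 = EU pi1 (pure a1) s2 - pi1 a1 a2"
    define g2 where "g2 = pi2 a1 a2 - EU pi2 (pure a1) s2"
    define m2 where "m2 = EU pi2 s1 (pure a2) - pi2 a1 a2"
    define P1 where "P1 = EU pi1 sg ta - pi1 a1 a2"
    define P2 where "P2 = EU pi2 sg ta - pi2 a1 a2"
    define p where "p = 1 - s1 a1"
    define q where "q = 1 - s2 a2"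
    have hg1: "c * p \<le> g1 \<and> g1 \<le> M * p"
    proof -
      have "g1 = (\<Sum>x\<in>UNIV. s1 x * (pi1 a1 a2 - pi1 x a2))"
        unfolding g1_def EU_pure2 sum_mixed_sub2[OF ms(1)] ..
      then show ?thesis unfolding p_def using sum_bound[OF ms(1), where a=a1 and f="\<lambda>x. pi1 a1 a2 - pi1 x a2" and lo=c and hi=M] gap1 by simp
    qed
    have hg2: "c * q \<le> g2 \<and> g2 \<le> M * q"
    proof -
      have "g2 = (\<Sum>y\<in>UNIV. s2 y * (pi2 a1 a2 - pi2 a1 y))"
        unfolding g2_def EU_pure1 sum_mixed_sub2[OF ms(2)] ..
      then show ?thesis unfolding q_def using sum_bound[OF ms(2), where a=a2 and f="\<lambda>y. pi2 a1 a2 - pi2 a1 y" and lo=c and hi=M] gap2 by simp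
    qed
    have hm1: "\<bar>m1\<bar> \<le> M * q"
    proof -
      have "m1 = (\<Sum>y\<in>UNIV. s2 y * (pi1 a1 y - pi1 a1 a2))"
        unfolding m1_def EU_pure1 sum_mixed_sub[OF ms(2)] ..
      then show ?thesis unfolding q_def using sum_bound[OF ms(2), where a=a2 and f="\<lambda>y. pi1 a1 y - pi1 a1 a2" and lo="-M" and hi=M] bd1 by (auto simp: abs_le_iff)
    qed
    have hm2: "\<bar>m2\<bar> \<le> M * p"
    proof -
      have "m2 = (\<Sum>x\<in>UNIV. s1 x * (pi2 x a2 - pi2 a1 a2))"
        unfolding m2_def EU_pure2 sum_mixed_sub[OF ms(1)] ..
      then show ?thesis unfolding p_def using sum_bound[OF ms(1), where a=a1 and f="\<lambda>x. pi2 x a2 - pi2 a1 a2" and lo="-M" and hi=M] bd2 by (auto simp: abs_le_iff)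
    qed
    have pq: "p \<ge> 0" "q \<ge> 0" unfolding p_def q_def using mixed_le1 ms by auto
    have r1: "P1 > 0 \<Longrightarrow> P1 + R*P2 \<le> 0" using rat1 ms unfolding P1_def P2_def by blast
    have r2: "P2 > 0 \<Longrightarrow> P2 + R*P1 \<le> 0" using rat2 ms unfolding P1_def P2_def by blast
    have par: "\<not>(P1 \<ge> 0 \<and> P2 \<ge> 0 \<and> (P1 > 0 \<or> P2 > 0))" using PAR ms unfolding P1_def P2_def by blast
    have D1: "fit1 pi1 ?mu2 b' th1 - fit1 pi1 ?mu2 b' u = (1-e2)*g1 + e2*m1 - e2*P1"
      unfolding F1a F1u g1_def m1_def P1_def by (simp add: algebra_simps)
    have D2: "fit2 pi2 ?mu1 b' th2 - fit2 pi2 ?mu1 b' v = (1-e1)*g2 + e1*m2 - e1*P2"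
      unfolding F2a F2v g2_def m2_def P2_def by (simp add: algebra_simps)
    show "(\<exists>thm. Some u = Some thm \<and> (\<forall>th\<in>supp (pure th1). fit1 pi1 ?mu2 b' thm < fit1 pi1 ?mu2 b' th)) \<or>
          (\<exists>thm. Some v = Some thm \<and> (\<forall>th\<in>supp (pure th2). fit2 pi2 ?mu1 b' thm < fit2 pi2 ?mu1 b' th)) \<or>
          balanced pi1 pi2 ?mu1 ?mu2 b'"
    proof (cases "fit1 pi1 ?mu2 b' u < fit1 pi1 ?mu2 b' th1")
      case True
      then show ?thesis unfolding supp_pure by auto
    next
      case F1: False
      show ?thesis
      proof (cases "fit2 pi2 ?mu1 b' v < fit2 pi2 ?mu1 b' th2")
        case True
        then show ?thesis unfolding supp_pure by auto
      next
        case False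
        have "(1-e2)*g1 + e2*m1 - e2*P1 = 0 \<and> (1-e1)*g2 + e1*m2 - e1*P2 = 0"
          by (rule core[OF e1(1,2) e2(1,2) c K(2) K(1) R M pq _ _ hm1 _ _ hm2 r1 r2 par])
             (use hg1 hg2 D1 D2 F1 False in auto)
        then have "fit1 pi1 ?mu2 b' u = fit1 pi1 ?mu2 b' th1" "fit2 pi2 ?mu1 b' v = fit2 pi2 ?mu1 b' th2"
          using D1 D2 by auto
        then have "balanced pi1 pi2 ?mu1 ?mu2 b'" unfolding balanced_def S1 S2 by auto
        then show ?thesis by simp
      qed
    qed
  qed
qed



lemma stable_A:
  fixes pi1 pi2 :: "'a::finite \<Rightarrow> 'b::finite \<Rightarrow> real" and a1 :: 'a and a2 :: 'b
  assumes gap1: "\<forall>x. x \<noteq> a1 \<longrightarrow> c \<le> pi1 a1 a2 - pi1 x a2 \<and> pi1 a1 a2 - pi1 x a2 \<le> M" and c: "c > 0"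
  and u: "u \<noteq> ind1 a1"
  shows "stable_against pi1 pi2 (pure (ind1 a1)) (pure (ind2 a2)) (\<lambda>_ _. (pure a1, pure a2)) (Some u) None"
proof -
  define th1 where "th1 = (ind1 a1 :: ('a,'b) ptype)"
  define th2 where "th2 = (ind2 a2 :: ('a,'b) ptype)"
  show ?thesis unfolding stable_against_def Let_def th1_def[symmetric] th2_def[symmetric] post_none
  proof (intro exI[of _ "1/2"] conjI allI impI)
    fix e1 e2 :: real and b' :: "('a,'b) eqmap"
    assume e: "0 < e1 \<and> e1 < 1/2 \<and> 0 < e2 \<and> e2 < 1/2"
    assume foc: "focal (pure th1) (pure th2) (\<lambda>_ _. (pure a1, pure a2)) (post (pure th1) (Some u) e1) (pure th2) b'"
    have e1: "0 < e1" "e1 < 1" using e by auto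
    have u': "th1 \<noteq> u" using u th1_def by auto
    have S1: "supp (post (pure th1) (Some u) e1) = {th1, u}" using post_some[OF u' e1] by simp
    have B: "\<And>x. x \<in> {th1,u} \<Longrightarrow> nash x th2 (fst (b' x th2)) (snd (b' x th2))"
      using foc S1 unfolding focal_def B1_def supp_pure by blast
    have b0: "b' th1 th2 = (pure a1, pure a2)" using foc unfolding focal_def supp_pure by simp
    define s1 where "s1 = fst (b' u th2)"
    have nu: "nash u th2 s1 (snd (b' u th2))" using B[of u] s1_def by simp
    have bu: "snd (b' u th2) = pure a2" using nu nash_ind2 th2_def by blast
    have ms: "mixed s1" using nu unfolding nash_def by auto
    have F1a: "fit1 pi1 (pure th2) b' th1 = pi1 a1 a2" by (simp add: fit1_single b0 EU_pp)
    have F1u: "fit1 pi1 (pure th2) b' u = EU pi1 s1 (pure a2)" by (simp add: fit1_single bu s1_def)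
    have "pi1 a1 a2 - EU pi1 s1 (pure a2) = (\<Sum>x\<in>UNIV. s1 x * (pi1 a1 a2 - pi1 x a2))"
      unfolding EU_pure2 sum_mixed_sub2[OF ms] ..
    then have "pi1 a1 a2 - EU pi1 s1 (pure a2) \<ge> c * (1 - s1 a1)"
      using sum_bound[OF ms, where a=a1 and f="\<lambda>x. pi1 a1 a2 - pi1 x a2" and lo=c and hi=M] gap1 by simp
    moreover have "c * (1 - s1 a1) \<ge> 0" using c mixed_le1[OF ms, of a1] by simp
    ultimately have le: "fit1 pi1 (pure th2) b' u \<le> fit1 pi1 (pure th2) b' th1" using F1a F1u by simp
    show "(\<exists>thm. Some u = Some thm \<and> (\<forall>th\<in>supp (pure th1). fit1 pi1 (pure th2) b' thm < fit1 pi1 (pure th2) b' th)) \<or>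
          (\<exists>thm. None = Some thm \<and> (\<forall>th\<in>supp (pure th2). fit2 pi2 (post (pure th1) (Some u) e1) b' thm < fit2 pi2 (post (pure th1) (Some u) e1) b' th)) \<or>
          balanced pi1 pi2 (post (pure th1) (Some u) e1) (pure th2) b'"
    proof (cases "fit1 pi1 (pure th2) b' u < fit1 pi1 (pure th2) b' th1")
      case True
      then show ?thesis unfolding supp_pure by auto
    next
      case False
      then have "fit1 pi1 (pure th2) b' u = fit1 pi1 (pure th2) b' th1" using le by simp
      then have "balanced pi1 pi2 (post (pure th1) (Some u) e1) (pure th2) b'" unfolding balanced_def S1 supp_pure by auto
      then show ?thesis by simp
    qed
  qed (auto)
qed

lemma stable_B:
  fixes pi1 pi2 :: "'a::finite \<Rightarrow> 'b::finite \<Rightarrow> real" and a1 :: 'a and a2 :: 'b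
  assumes gap2: "\<forall>y. y \<noteq> a2 \<longrightarrow> c \<le> pi2 a1 a2 - pi2 a1 y \<and> pi2 a1 a2 - pi2 a1 y \<le> M" and c: "c > 0"
  and v: "v \<noteq> ind2 a2"
  shows "stable_against pi1 pi2 (pure (ind1 a1)) (pure (ind2 a2)) (\<lambda>_ _. (pure a1, pure a2)) None (Some v)"
proof -
  define th1 where "th1 = (ind1 a1 :: ('a,'b) ptype)"
  define th2 where "th2 = (ind2 a2 :: ('a,'b) ptype)"
  show ?thesis unfolding stable_against_def Let_def th1_def[symmetric] th2_def[symmetric] post_none
  proof (intro exI[of _ "1/2"] conjI allI impI)
    fix e1 e2 :: real and b' :: "('a,'b) eqmap"
    assume e: "0 < e1 \<and> e1 < 1/2 \<and> 0 < e2 \<and> e2 < 1/2"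
    assume foc: "focal (pure th1) (pure th2) (\<lambda>_ _. (pure a1, pure a2)) (pure th1) (post (pure th2) (Some v) e2) b'"
    have e2: "0 < e2" "e2 < 1" using e by auto
    have v': "th2 \<noteq> v" using v th2_def by auto
    have S2: "supp (post (pure th2) (Some v) e2) = {th2, v}" using post_some[OF v' e2] by simp
    have B: "\<And>y. y \<in> {th2,v} \<Longrightarrow> nash th1 y (fst (b' th1 y)) (snd (b' th1 y))"
      using foc S2 unfolding focal_def B1_def supp_pure by blast
    have b0: "b' th1 th2 = (pure a1, pure a2)" using foc unfolding focal_def supp_pure by simp
    define s2 where "s2 = snd (b' th1 v)"
    have nv: "nash th1 v (fst (b' th1 v)) s2" using B[of v] s2_def by simp
    have bv: "fst (b' th1 v) = pure a1" using nv nash_ind1 th1_def by blast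
    have ms: "mixed s2" using nv unfolding nash_def by auto
    have F2a: "fit2 pi2 (pure th1) b' th2 = pi2 a1 a2" by (simp add: fit2_single b0 EU_pp)
    have F2v: "fit2 pi2 (pure th1) b' v = EU pi2 (pure a1) s2" by (simp add: fit2_single bv s2_def)
    have "pi2 a1 a2 - EU pi2 (pure a1) s2 = (\<Sum>y\<in>UNIV. s2 y * (pi2 a1 a2 - pi2 a1 y))"
      unfolding EU_pure1 sum_mixed_sub2[OF ms] ..
    then have "pi2 a1 a2 - EU pi2 (pure a1) s2 \<ge> c * (1 - s2 a2)"
      using sum_bound[OF ms, where a=a2 and f="\<lambda>y. pi2 a1 a2 - pi2 a1 y" and lo=c and hi=M] gap2 by simp
    moreover have "c * (1 - s2 a2) \<ge> 0" using c mixed_le1[OF ms, of a2] by simp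
    ultimately have le: "fit2 pi2 (pure th1) b' v \<le> fit2 pi2 (pure th1) b' th2" using F2a F2v by simp
    show "(\<exists>thm. None = Some thm \<and> (\<forall>th\<in>supp (pure th1). fit1 pi1 (post (pure th2) (Some v) e2) b' thm < fit1 pi1 (post (pure th2) (Some v) e2) b' th)) \<or>
          (\<exists>thm. Some v = Some thm \<and> (\<forall>th\<in>supp (pure th2). fit2 pi2 (pure th1) b' thm < fit2 pi2 (pure th1) b' th)) \<or>
          balanced pi1 pi2 (pure th1) (post (pure th2) (Some v) e2) b'"
    proof (cases "fit2 pi2 (pure th1) b' v < fit2 pi2 (pure th1) b' th2")
      case True
      then show ?thesis unfolding supp_pure by auto
    next
      case False
      then have "fit2 pi2 (pure th1) b' v = fit2 pi2 (pure th1) b' th2" using le by simp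
      then have "balanced pi1 pi2 (pure th1) (post (pure th2) (Some v) e2) b'" unfolding balanced_def S2 supp_pure by auto
      then show ?thesis by simp
    qed
  qed (auto)
qed



lemma inv_bound: "(d::real) > 0 \<Longrightarrow> 1/d \<le> B \<Longrightarrow> 1/B \<le> d"
proof -
  assume d: "d > 0" and b: "1/d \<le> B"
  have Bp: "B > 0" using d b by (smt (verit) divide_pos_pos)
  have "1 \<le> B * d" using b d by (simp add: divide_le_eq mult.commute)
  then show ?thesis using Bp by (simp add: divide_le_eq mult.commute)
qed

lemma ratio_bound: "(u::real) > 0 \<Longrightarrow> v < 0 \<Longrightarrow> u / (- v) \<le> R \<Longrightarrow> u + R * v \<le> 0"
proof -
  assume u: "u > 0" and v: "v < 0" and r: "u / (- v) \<le> R"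
  have nv: "- v > 0" using v by simp
  have "u \<le> R * (- v)" using r pos_divide_le_eq[OF nv] by blast
  then show ?thesis by simp
qed

theorem mainTheorem4:
  fixes pi1 pi2 :: "'a::finite \<Rightarrow> 'b::finite \<Rightarrow> real" and a1 :: 'a and a2 :: 'b
  assumes "pareto_efficient pi1 pi2 (pure a1) (pure a2)"
    and "strict_nash pi1 pi2 a1 a2"
  shows "\<exists>mu1 mu2 b. stable_config pi1 pi2 mu1 mu2 b \<and>
           (\<forall>x y. outcome mu1 mu2 b x y = (if x = a1 \<and> y = a2 then 1 else 0))"
proof -
  define k1 where "k1 = pi1 a1 a2"
  define k2 where "k2 = pi2 a1 a2"
  have PAR: "\<forall>s t. mixed s \<longrightarrow> mixed t \<longrightarrow> \<not> (EU pi1 s t - k1 \<ge> 0 \<and> EU pi2 s t - k2 \<ge> 0 \<and>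
                   (EU pi1 s t - k1 > 0 \<or> EU pi2 s t - k2 > 0))"
    using assms(1) unfolding pareto_efficient_def EU_pp k1_def k2_def by auto
  have PAR': "\<forall>s t. mixed s \<longrightarrow> mixed t \<longrightarrow> \<not> (EU pi2 s t - k2 \<ge> 0 \<and> EU pi1 s t - k1 \<ge> 0 \<and>
                   (EU pi2 s t - k2 > 0 \<or> EU pi1 s t - k1 > 0))"
    using PAR by blast
  have SN1: "\<forall>x. x \<noteq> a1 \<longrightarrow> k1 - pi1 x a2 > 0" and SN2: "\<forall>y. y \<noteq> a2 \<longrightarrow> k2 - pi2 a1 y > 0"
    using assms(2) unfolding strict_nash_def k1_def k2_def by auto
  obtain BM where BM: "\<forall>x y. \<bar>pi1 x y - k1\<bar> + \<bar>pi2 x y - k2\<bar> \<le> BM"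
    using bound_fin2[of "\<lambda>x y. \<bar>pi1 x y - k1\<bar> + \<bar>pi2 x y - k2\<bar>"] by blast
  define M where "M = max BM 0"
  have M0: "M \<ge> 0" and Mb1: "\<And>x y. \<bar>pi1 x y - k1\<bar> \<le> M" and Mb2: "\<And>x y. \<bar>pi2 x y - k2\<bar> \<le> M"
  proof -
    show "M \<ge> 0" unfolding M_def by simp
    fix x y
    have "\<bar>pi1 x y - k1\<bar> + \<bar>pi2 x y - k2\<bar> \<le> BM" using BM by blast
    then show "\<bar>pi1 x y - k1\<bar> \<le> M" "\<bar>pi2 x y - k2\<bar> \<le> M" unfolding M_def
      by (smt (verit) abs_ge_zero)+
  qed
  obtain Q1 where Q1: "\<forall>x. (if x \<noteq> a1 then 1 / (k1 - pi1 x a2) else 0) \<le> Q1"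
    using bound_fin[of "\<lambda>x. if x \<noteq> a1 then 1 / (k1 - pi1 x a2) else 0"] by blast
  obtain Q2 where Q2: "\<forall>y. (if y \<noteq> a2 then 1 / (k2 - pi2 a1 y) else 0) \<le> Q2"
    using bound_fin[of "\<lambda>y. if y \<noteq> a2 then 1 / (k2 - pi2 a1 y) else 0"] by blast
  define c where "c = 1 / max 1 (max Q1 Q2)"
  have c0: "c > 0" unfolding c_def by simp
  have gap1: "\<forall>x. x \<noteq> a1 \<longrightarrow> c \<le> pi1 a1 a2 - pi1 x a2 \<and> pi1 a1 a2 - pi1 x a2 \<le> M"
  proof (intro allI impI conjI)
    fix x assume x: "x \<noteq> a1"
    have "1 / (k1 - pi1 x a2) \<le> max 1 (max Q1 Q2)" using Q1 x by (smt (verit))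
    then show "c \<le> pi1 a1 a2 - pi1 x a2" unfolding c_def k1_def[symmetric] using inv_bound SN1 x by blast
    show "pi1 a1 a2 - pi1 x a2 \<le> M" using Mb1[of x a2] unfolding k1_def by (simp add: abs_le_iff)
  qed
  have gap2: "\<forall>y. y \<noteq> a2 \<longrightarrow> c \<le> pi2 a1 a2 - pi2 a1 y \<and> pi2 a1 a2 - pi2 a1 y \<le> M"
  proof (intro allI impI conjI)
    fix y assume y: "y \<noteq> a2"
    have "1 / (k2 - pi2 a1 y) \<le> max 1 (max Q1 Q2)" using Q2 y by (smt (verit))
    then show "c \<le> pi2 a1 a2 - pi2 a1 y" unfolding c_def k2_def[symmetric] using inv_bound SN2 y by blast
    show "pi2 a1 a2 - pi2 a1 y \<le> M" using Mb2[of a1 y] unfolding k2_def by (simp add: abs_le_iff)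
  qed
  have bd1: "\<forall>y. y \<noteq> a2 \<longrightarrow> -M \<le> pi1 a1 y - pi1 a1 a2 \<and> pi1 a1 y - pi1 a1 a2 \<le> M"
  proof (intro allI impI)
    fix y have "\<bar>pi1 a1 y - k1\<bar> \<le> M" by (rule Mb1)
    then show "-M \<le> pi1 a1 y - pi1 a1 a2 \<and> pi1 a1 y - pi1 a1 a2 \<le> M" unfolding k1_def abs_le_iff by linarith
  qed
  have bd2: "\<forall>x. x \<noteq> a1 \<longrightarrow> -M \<le> pi2 x a2 - pi2 a1 a2 \<and> pi2 x a2 - pi2 a1 a2 \<le> M"
  proof (intro allI impI)
    fix x have "\<bar>pi2 x a2 - k2\<bar> \<le> M" by (rule Mb2)
    then show "-M \<le> pi2 x a2 - pi2 a1 a2 \<and> pi2 x a2 - pi2 a1 a2 \<le> M" unfolding k2_def abs_le_iff by linarith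
  qed
  obtain R1 where R1: "\<forall>x y. (if pi2 x y - k2 < 0 then (pi1 x y - k1) / (- (pi2 x y - k2)) else 0) \<le> R1"
    using bound_fin2[of "\<lambda>x y. if pi2 x y - k2 < 0 then (pi1 x y - k1) / (- (pi2 x y - k2)) else 0"] by blast
  obtain R2 where R2: "\<forall>x y. (if pi1 x y - k1 < 0 then (pi2 x y - k2) / (- (pi1 x y - k1)) else 0) \<le> R2"
    using bound_fin2[of "\<lambda>x y. if pi1 x y - k1 < 0 then (pi2 x y - k2) / (- (pi1 x y - k1)) else 0"] by blast
  define R where "R = max 1 (max R1 R2)"
  have R1': "R \<ge> 1" unfolding R_def by simp
  have pureP: "\<And>x y. \<not> (pi1 x y - k1 \<ge> 0 \<and> pi2 x y - k2 \<ge> 0 \<and> (pi1 x y - k1 > 0 \<or> pi2 x y - k2 > 0))"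
    using PAR mixed_pure EU_pp by metis
  have Hp1: "\<forall>x y. pi1 x y - k1 > 0 \<longrightarrow> (pi1 x y - k1) + R * (pi2 x y - k2) \<le> 0"
  proof (intro allI impI)
    fix x y assume p: "pi1 x y - k1 > 0"
    then have v: "pi2 x y - k2 < 0" using pureP[of x y] by linarith
    have "(pi1 x y - k1) / (- (pi2 x y - k2)) \<le> R" using R1 v unfolding R_def by (smt (verit))
    then show "(pi1 x y - k1) + R * (pi2 x y - k2) \<le> 0" using ratio_bound p v by blast
  qed
  have Hp2: "\<forall>x y. pi2 x y - k2 > 0 \<longrightarrow> (pi2 x y - k2) + R * (pi1 x y - k1) \<le> 0"
  proof (intro allI impI)
    fix x y assume p: "pi2 x y - k2 > 0"
    then have v: "pi1 x y - k1 < 0" using pureP[of x y] by linarith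
    have "(pi2 x y - k2) / (- (pi1 x y - k1)) \<le> R" using R2 v unfolding R_def by (smt (verit))
    then show "(pi2 x y - k2) + R * (pi1 x y - k1) \<le> 0" using ratio_bound p v by blast
  qed
  have Rp: "R > 0" using R1' by simp
  have rat1: "\<forall>s t. mixed s \<longrightarrow> mixed t \<longrightarrow> EU pi1 s t - pi1 a1 a2 > 0 \<longrightarrow>
               (EU pi1 s t - pi1 a1 a2) + R*(EU pi2 s t - pi2 a1 a2) \<le> 0"
    using dir[OF PAR Rp Hp1] unfolding k1_def k2_def by blast
  have rat2: "\<forall>s t. mixed s \<longrightarrow> mixed t \<longrightarrow> EU pi2 s t - pi2 a1 a2 > 0 \<longrightarrow>
               (EU pi2 s t - pi2 a1 a2) + R*(EU pi1 s t - pi1 a1 a2) \<le> 0"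
    using dir[OF PAR' Rp Hp2] unfolding k1_def k2_def by blast
  define K where "K = (R*M + M + 1) / c"
  have Kc: "K * c \<ge> R*M + M + 1" unfolding K_def using c0 by simp
  have K0: "K \<ge> 0" unfolding K_def using c0 M0 R1' by simp
  have PAR0: "\<forall>s t. mixed s \<longrightarrow> mixed t \<longrightarrow> \<not> (EU pi1 s t - pi1 a1 a2 \<ge> 0 \<and> EU pi2 s t - pi2 a1 a2 \<ge> 0 \<and>
                   (EU pi1 s t - pi1 a1 a2 > 0 \<or> EU pi2 s t - pi2 a1 a2 > 0))"
    using PAR unfolding k1_def k2_def .
  define th1 where "th1 = (ind1 a1 :: ('a,'b) ptype)"
  define th2 where "th2 = (ind2 a2 :: ('a,'b) ptype)"
  define b where "b = (\<lambda>(_::('a,'b) ptype) (_::('a,'b) ptype). (pure a1, pure a2))"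
  have sc: "stable_config pi1 pi2 (pure th1) (pure th2) b"
    unfolding stable_config_def
  proof (intro conjI allI impI)
    show "fdist (pure th1)" "fdist (pure th2)" by (rule fdist_pure)+
    show "B1 (pure th1) (pure th2) b" unfolding B1_def supp_pure b_def th1_def th2_def
      using nash_base by simp
    show "balanced pi1 pi2 (pure th1) (pure th2) b" unfolding balanced_def supp_pure by simp
  next
    fix m1 m2 :: "('a,'b) ptype option"
    assume nn: "m1 \<noteq> None \<or> m2 \<noteq> None"
      and h1: "\<forall>thm. m1 = Some thm \<longrightarrow> thm \<notin> supp (pure th1)"
      and h2: "\<forall>thm. m2 = Some thm \<longrightarrow> thm \<notin> supp (pure th2)"
    show "stable_against pi1 pi2 (pure th1) (pure th2) b m1 m2"
    proof (cases m1)
      case None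
      then obtain v where v: "m2 = Some v" using nn by auto
      then have "v \<noteq> ind2 a2" using h2 unfolding supp_pure th2_def by auto
      then show ?thesis unfolding None v b_def th1_def th2_def using stable_B[where ?pi1.0=pi1 and ?pi2.0=pi2 and ?a1.0=a1 and ?a2.0=a2, OF gap2 c0] by blast
    next
      case (Some u)
      then have u: "u \<noteq> ind1 a1" using h1 unfolding supp_pure th1_def by auto
      show ?thesis
      proof (cases m2)
        case None
        then show ?thesis unfolding None Some b_def th1_def th2_def using stable_A[where ?pi1.0=pi1 and ?pi2.0=pi2 and ?a1.0=a1 and ?a2.0=a2, OF gap1 c0 u] by blast
      next
        case (Some v)
        then have v: "v \<noteq> ind2 a2" using h2 unfolding supp_pure th2_def by auto
        show ?thesis unfolding Some \<open>m1 = Some u\<close> b_def th1_def th2_def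
          by (rule stable_C[OF c0 M0 R1' K0 Kc gap1 gap2 bd1 bd2 rat1 rat2 PAR0 u v])
      qed
    qed
  qed
  have oc: "\<forall>x y. outcome (pure th1) (pure th2) b x y = (if x = a1 \<and> y = a2 then 1 else 0)"
    unfolding outcome_def supp_pure b_def by (simp add: pure_same pure_def)
  show ?thesis using sc oc by blast
qed

end
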